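(* Let $X, Y$ be Polish spaces equipped with Borel probability measures $\mu$ and $\nu$, and let $c: X\times Y\to[0,\infty]$ be Borel measurable. Then $P^{\mathrm{rel}}\ge D$.
   Context: For $0\le\varepsilon\le1$, let $\Pi^{\varepsilon}(\mu,\nu)$ be the set of non-negative Borel measures $\pi$ on $X\times Y$ with total mass $\pi(X\times Y)\ge 1-\varepsilon$ whose marginals satisfy $p_X(\pi)\le\mu$ and $p_Y(\pi)\le\nu$. Set $P^{\varepsilon}=\inf\{\int c\,d\pi : \pi\in\Pi^{\varepsilon}(\mu,\nu)\}$ and $P^{\mathrm{rel}}=\lim_{\varepsilon\to0}P^{\varepsilon}$. Let $D=\sup\{\int_X\varphi\,d\mu+\int_Y\psi\,d\nu\}$, where the supremum runs over all $\mu$-integrable $\varphi:X\to[-\infty,\infty)$ and $\nu$-integrable $\psi:Y\to[-\infty,\infty)$ with $\varphi(x)+\psi(y)\le c(x,y)$ for all $(x,y)\in X\times Y$. *)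

theory Defs
  imports "HOL-Analysis.Analysis"
begin

definition Pi_eps :: "'a::polish_space measure \<Rightarrow> 'b::polish_space measure \<Rightarrow> real
    \<Rightarrow> ('a \<times> 'b) measure set" where
  "Pi_eps \<mu> \<nu> \<epsilon> = {\<pi>. sets \<pi> = sets borel
      \<and> emeasure \<pi> (space \<pi>) \<ge> ennreal (1 - \<epsilon>)
      \<and> (\<forall>A\<in>sets borel. emeasure \<pi> (fst -` A) \<le> emeasure \<mu> A)
      \<and> (\<forall>B\<in>sets borel. emeasure \<pi> (snd -` B) \<le> emeasure \<nu> B)}"

definition P_eps :: "'a::polish_space measure \<Rightarrow> 'b::polish_space measure
    \<Rightarrow> ('a \<times> 'b \<Rightarrow> ennreal) \<Rightarrow> real \<Rightarrow> ennreal" where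
  "P_eps \<mu> \<nu> c \<epsilon> = (INF \<pi>\<in>Pi_eps \<mu> \<nu> \<epsilon>. \<integral>\<^sup>+ z. c z \<partial>\<pi>)"

definition P_rel :: "'a::polish_space measure \<Rightarrow> 'b::polish_space measure
    \<Rightarrow> ('a \<times> 'b \<Rightarrow> ennreal) \<Rightarrow> ennreal" where
  "P_rel \<mu> \<nu> c = Lim (at_right (0::real)) (P_eps \<mu> \<nu> c)"

definition ereal_integrable :: "'a measure \<Rightarrow> ('a \<Rightarrow> ereal) \<Rightarrow> bool" where
  "ereal_integrable M f \<longleftrightarrow> f \<in> borel_measurable M
      \<and> (\<integral>\<^sup>+ x. e2ennreal (f x) \<partial>M) < \<infinity> \<and> (\<integral>\<^sup>+ x. e2ennreal (- f x) \<partial>M) < \<infinity>"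

definition ereal_integral :: "'a measure \<Rightarrow> ('a \<Rightarrow> ereal) \<Rightarrow> ereal" where
  "ereal_integral M f = enn2ereal (\<integral>\<^sup>+ x. e2ennreal (f x) \<partial>M)
      - enn2ereal (\<integral>\<^sup>+ x. e2ennreal (- f x) \<partial>M)"

definition D_dual :: "'a::polish_space measure \<Rightarrow> 'b::polish_space measure
    \<Rightarrow> ('a \<times> 'b \<Rightarrow> ennreal) \<Rightarrow> ereal" where
  "D_dual \<mu> \<nu> c = (SUP (\<phi>, \<psi>) \<in> {(\<phi>, \<psi>). ereal_integrable \<mu> \<phi> \<and> ereal_integrable \<nu> \<psi>
          \<and> (\<forall>x. \<phi> x \<noteq> \<infinity>) \<and> (\<forall>y. \<psi> y \<noteq> \<infinity>)
          \<and> (\<forall>x y. \<phi> x + \<psi> y \<le> enn2ereal (c (x, y)))}.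
        ereal_integral \<mu> \<phi> + ereal_integral \<nu> \<psi>)"

end

theory Submission
  imports Defs
begin
lemma marg_fst:
  fixes \<pi> :: "('a::polish_space \<times> 'b::polish_space) measure"
  assumes "\<pi> \<in> Pi_eps \<mu> \<nu> \<epsilon>" "sets \<mu> = sets borel" "g \<in> borel_measurable borel"
  shows "(\<integral>\<^sup>+ z. g (fst z) \<partial>\<pi>) \<le> (\<integral>\<^sup>+ x. g x \<partial>\<mu>)"
proof -
  have sp: "sets \<pi> = sets borel" and dom: "\<forall>A\<in>sets borel. emeasure \<pi> (fst -` A) \<le> emeasure \<mu> A"
    using assms(1) by (auto simp: Pi_eps_def)
  have spc: "space \<pi> = UNIV" using sets_eq_imp_space_eq[OF sp] by simp
  have spm: "space \<mu> = UNIV" using sets_eq_imp_space_eq[OF assms(2)] by simp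
  have fm: "fst \<in> measurable \<pi> borel"
    by (subst measurable_cong_sets[OF sp refl]) (metis borel_prod measurable_fst)
  have "(\<integral>\<^sup>+ z. g (fst z) \<partial>\<pi>) = (\<integral>\<^sup>+ x. g x \<partial>distr \<pi> borel fst)"
    by (rule nn_integral_distr[symmetric]) (use fm assms(3) in auto)
  also have "\<dots> \<le> (\<integral>\<^sup>+ x. g x \<partial>\<mu>)"
  proof (rule nn_integral_mono_measure)
    show "sets (distr \<pi> borel fst) = sets \<mu>" using assms(2) by simp
    show "distr \<pi> borel fst \<le> \<mu>"
      unfolding le_measure_iff using assms(2) spm
      apply (auto simp: le_fun_def)
      subgoal for A
        apply (cases "A \<in> sets borel")
        using dom fm spc by (auto simp: emeasure_distr emeasure_notin_sets)
      done
  qed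
  finally show ?thesis .
qed
lemma marg_snd:
  fixes \<pi> :: "('a::polish_space \<times> 'b::polish_space) measure"
  assumes "\<pi> \<in> Pi_eps \<mu> \<nu> \<epsilon>" "sets \<nu> = sets borel" "g \<in> borel_measurable borel"
  shows "(\<integral>\<^sup>+ z. g (snd z) \<partial>\<pi>) \<le> (\<integral>\<^sup>+ x. g x \<partial>\<nu>)"
proof -
  have sp: "sets \<pi> = sets borel" and dom: "\<forall>A\<in>sets borel. emeasure \<pi> (snd -` A) \<le> emeasure \<nu> A"
    using assms(1) by (auto simp: Pi_eps_def)
  have spc: "space \<pi> = UNIV" using sets_eq_imp_space_eq[OF sp] by simp
  have spm: "space \<nu> = UNIV" using sets_eq_imp_space_eq[OF assms(2)] by simp
  have fm: "snd \<in> measurable \<pi> borel"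
    by (subst measurable_cong_sets[OF sp refl]) (metis borel_prod measurable_snd)
  have "(\<integral>\<^sup>+ z. g (snd z) \<partial>\<pi>) = (\<integral>\<^sup>+ x. g x \<partial>distr \<pi> borel snd)"
    by (rule nn_integral_distr[symmetric]) (use fm assms(3) in auto)
  also have "\<dots> \<le> (\<integral>\<^sup>+ x. g x \<partial>\<nu>)"
  proof (rule nn_integral_mono_measure)
    show "sets (distr \<pi> borel snd) = sets \<nu>" using assms(2) by simp
    show "distr \<pi> borel snd \<le> \<nu>"
      unfolding le_measure_iff using assms(2) spm
      apply (auto simp: le_fun_def)
      subgoal for A
        apply (cases "A \<in> sets borel")
        using dom fm spc by (auto simp: emeasure_distr emeasure_notin_sets)
      done
  qed
  finally show ?thesis .
qed
lemma Pi_eps_mono: "e1 \<le> e2 \<Longrightarrow> Pi_eps \<mu> \<nu> e1 \<subseteq> Pi_eps \<mu> \<nu> e2"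
  unfolding Pi_eps_def apply auto apply (rule order_trans[OF ennreal_leI]) by auto

lemma P_eps_le_P_rel:
  assumes "0 < \<epsilon>" shows "P_eps \<mu> \<nu> c \<epsilon> \<le> P_rel \<mu> \<nu> c"
proof -
  have anti: "e1 \<le> e2 \<Longrightarrow> P_eps \<mu> \<nu> c e2 \<le> P_eps \<mu> \<nu> c e1" for e1 e2
    unfolding P_eps_def by (rule INF_superset_mono[OF Pi_eps_mono]) auto
  define S where "S = (SUP e\<in>{0<..}. P_eps \<mu> \<nu> c e)"
  have "(P_eps \<mu> \<nu> c \<longlongrightarrow> S) (at_right 0)"
  proof (rule order_tendstoI)
    fix a assume "a < S"
    then obtain e0 where e0: "e0 > 0" "a < P_eps \<mu> \<nu> c e0" unfolding S_def less_SUP_iff by auto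
    show "\<forall>\<^sub>F x in at_right 0. a < P_eps \<mu> \<nu> c x"
      unfolding eventually_at_right[OF e0(1)]
      using e0 anti by (intro exI[of _ e0]) (auto intro: less_le_trans)
  next
    fix a assume "S < a"
    have "\<forall>\<^sub>F x in at_right (0::real). 0 < x" by (rule eventually_at_right_less)
    then show "\<forall>\<^sub>F x in at_right 0. P_eps \<mu> \<nu> c x < a"
      by eventually_elim (use \<open>S < a\<close> in \<open>auto simp: S_def intro: le_less_trans[OF SUP_upper]\<close>)
  qed
  then have "P_rel \<mu> \<nu> c = S" unfolding P_rel_def by (intro tendsto_Lim) auto
  then show ?thesis using assms unfolding S_def by (auto intro: SUP_upper)
qed

lemma trunc_bound:
  fixes \<pi> :: "('a::polish_space \<times> 'b::polish_space) measure"
  assumes pi: "\<pi> \<in> Pi_eps \<mu> \<nu> \<epsilon>" and sm: "sets \<mu> = sets borel" and m1: "emeasure \<mu> (space \<mu>) = 1"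
    and g: "g \<in> borel_measurable borel" and gm: "\<And>x. g x \<le> ennreal m" and "0 \<le> m" "0 \<le> \<epsilon>"
  shows "(\<integral>\<^sup>+ x. g x \<partial>\<mu>) \<le> (\<integral>\<^sup>+ z. g (fst z) \<partial>\<pi>) + ennreal (m * \<epsilon>)"
proof -
  have sp: "sets \<pi> = sets borel" and big: "emeasure \<pi> (space \<pi>) \<ge> ennreal (1 - \<epsilon>)"
    using pi by (auto simp: Pi_eps_def)
  have fm: "fst \<in> measurable \<pi> borel"
    by (subst measurable_cong_sets[OF sp refl]) (metis borel_prod measurable_fst)
  have gmu: "g \<in> borel_measurable \<mu>" using g measurable_cong_sets[OF sm refl] by blast
  have gpi: "(\<lambda>z. g (fst z)) \<in> borel_measurable \<pi>" using measurable_compose[OF fm g] .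
  define h where "h x = ennreal m - g x" for x
  have hb: "h \<in> borel_measurable borel" unfolding h_def using g by measurable
  have hmu: "h \<in> borel_measurable \<mu>" using hb measurable_cong_sets[OF sm refl] by blast
  have hpi: "(\<lambda>z. h (fst z)) \<in> borel_measurable \<pi>" using measurable_compose[OF fm hb] .
  have gh: "g x + h x = ennreal m" for x unfolding h_def using gm[of x] by (simp add: add_diff_inverse_ennreal)
  have "(\<integral>\<^sup>+ x. g x \<partial>\<mu>) + (\<integral>\<^sup>+ x. h x \<partial>\<mu>) = (\<integral>\<^sup>+ x. g x + h x \<partial>\<mu>)"
    by (rule nn_integral_add[symmetric]) (use gmu hmu in auto)
  also have "\<dots> = ennreal m" using m1 by (simp add: gh)
  finally have e1: "(\<integral>\<^sup>+ x. g x \<partial>\<mu>) + (\<integral>\<^sup>+ x. h x \<partial>\<mu>) = ennreal m" .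
  have "(\<integral>\<^sup>+ z. g (fst z) \<partial>\<pi>) + (\<integral>\<^sup>+ z. h (fst z) \<partial>\<pi>) = (\<integral>\<^sup>+ z. g (fst z) + h (fst z) \<partial>\<pi>)"
    by (rule nn_integral_add[symmetric]) (use gpi hpi in auto)
  also have "\<dots> = ennreal m * emeasure \<pi> (space \<pi>)" by (simp add: gh)
  finally have e2: "(\<integral>\<^sup>+ z. g (fst z) \<partial>\<pi>) + (\<integral>\<^sup>+ z. h (fst z) \<partial>\<pi>) = ennreal m * emeasure \<pi> (space \<pi>)" .
  have hle: "(\<integral>\<^sup>+ z. h (fst z) \<partial>\<pi>) \<le> (\<integral>\<^sup>+ x. h x \<partial>\<mu>)" by (rule marg_fst[OF pi sm hb])
  have one: "1 \<le> emeasure \<pi> (space \<pi>) + ennreal \<epsilon>"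
  proof (cases "\<epsilon> \<le> 1")
    case True
    then have "1 = ennreal (1 - \<epsilon>) + ennreal \<epsilon>" using \<open>0 \<le> \<epsilon>\<close> by (simp flip: ennreal_plus)
    then show ?thesis using big by (metis add_right_mono)
  next
    case False then show ?thesis by (metis add_increasing zero_le linear ennreal_1 ennreal_leI)
  qed
  have "ennreal m \<le> ennreal m * emeasure \<pi> (space \<pi>) + ennreal (m * \<epsilon>)"
  proof -
    have "ennreal m = ennreal m * 1" by simp
    also have "\<dots> \<le> ennreal m * (emeasure \<pi> (space \<pi>) + ennreal \<epsilon>)" by (rule mult_left_mono[OF one]) simp
    also have "\<dots> = ennreal m * emeasure \<pi> (space \<pi>) + ennreal (m * \<epsilon>)"
      using \<open>0 \<le> m\<close> \<open>0 \<le> \<epsilon>\<close> by (simp add: distrib_left ennreal_mult)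
    finally show ?thesis .
  qed
  then have "(\<integral>\<^sup>+ x. h x \<partial>\<mu>) + (\<integral>\<^sup>+ x. g x \<partial>\<mu>) \<le> ((\<integral>\<^sup>+ z. g (fst z) \<partial>\<pi>) + (\<integral>\<^sup>+ z. h (fst z) \<partial>\<pi>)) + ennreal (m * \<epsilon>)"
    using e1 e2 by (simp add: add.commute)
  also have "\<dots> \<le> ((\<integral>\<^sup>+ z. g (fst z) \<partial>\<pi>) + (\<integral>\<^sup>+ x. h x \<partial>\<mu>)) + ennreal (m * \<epsilon>)"
    using hle by (intro add_right_mono add_left_mono)
  also have "\<dots> = (\<integral>\<^sup>+ x. h x \<partial>\<mu>) + ((\<integral>\<^sup>+ z. g (fst z) \<partial>\<pi>) + ennreal (m * \<epsilon>))"
    by (simp add: ac_simps)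
  finally have "(\<integral>\<^sup>+ x. h x \<partial>\<mu>) + (\<integral>\<^sup>+ x. g x \<partial>\<mu>) \<le> (\<integral>\<^sup>+ x. h x \<partial>\<mu>) + ((\<integral>\<^sup>+ z. g (fst z) \<partial>\<pi>) + ennreal (m * \<epsilon>))" .
  moreover have "(\<integral>\<^sup>+ x. h x \<partial>\<mu>) \<noteq> \<infinity>"
    using e1 by (metis ennreal_add_eq_top ennreal_neq_top infinity_ennreal_def)
  ultimately show ?thesis by (simp add: ennreal_add_left_cancel_le)
qed

lemma trunc_bound_snd:
  fixes \<pi> :: "('a::polish_space \<times> 'b::polish_space) measure"
  assumes pi: "\<pi> \<in> Pi_eps \<mu> \<nu> \<epsilon>" and sm: "sets \<nu> = sets borel" and m1: "emeasure \<nu> (space \<nu>) = 1"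
    and g: "g \<in> borel_measurable borel" and gm: "\<And>x. g x \<le> ennreal m" and "0 \<le> m" "0 \<le> \<epsilon>"
  shows "(\<integral>\<^sup>+ x. g x \<partial>\<nu>) \<le> (\<integral>\<^sup>+ z. g (snd z) \<partial>\<pi>) + ennreal (m * \<epsilon>)"
proof -
  have sp: "sets \<pi> = sets borel" and big: "emeasure \<pi> (space \<pi>) \<ge> ennreal (1 - \<epsilon>)"
    using pi by (auto simp: Pi_eps_def)
  have fm: "snd \<in> measurable \<pi> borel"
    by (subst measurable_cong_sets[OF sp refl]) (metis borel_prod measurable_snd)
  have gmu: "g \<in> borel_measurable \<nu>" using g measurable_cong_sets[OF sm refl] by blast
  have gpi: "(\<lambda>z. g (snd z)) \<in> borel_measurable \<pi>" using measurable_compose[OF fm g] .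
  define h where "h x = ennreal m - g x" for x
  have hb: "h \<in> borel_measurable borel" unfolding h_def using g by measurable
  have hmu: "h \<in> borel_measurable \<nu>" using hb measurable_cong_sets[OF sm refl] by blast
  have hpi: "(\<lambda>z. h (snd z)) \<in> borel_measurable \<pi>" using measurable_compose[OF fm hb] .
  have gh: "g x + h x = ennreal m" for x unfolding h_def using gm[of x] by (simp add: add_diff_inverse_ennreal)
  have "(\<integral>\<^sup>+ x. g x \<partial>\<nu>) + (\<integral>\<^sup>+ x. h x \<partial>\<nu>) = (\<integral>\<^sup>+ x. g x + h x \<partial>\<nu>)"
    by (rule nn_integral_add[symmetric]) (use gmu hmu in auto)
  also have "\<dots> = ennreal m" using m1 by (simp add: gh)
  finally have e1: "(\<integral>\<^sup>+ x. g x \<partial>\<nu>) + (\<integral>\<^sup>+ x. h x \<partial>\<nu>) = ennreal m" .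
  have "(\<integral>\<^sup>+ z. g (snd z) \<partial>\<pi>) + (\<integral>\<^sup>+ z. h (snd z) \<partial>\<pi>) = (\<integral>\<^sup>+ z. g (snd z) + h (snd z) \<partial>\<pi>)"
    by (rule nn_integral_add[symmetric]) (use gpi hpi in auto)
  also have "\<dots> = ennreal m * emeasure \<pi> (space \<pi>)" by (simp add: gh)
  finally have e2: "(\<integral>\<^sup>+ z. g (snd z) \<partial>\<pi>) + (\<integral>\<^sup>+ z. h (snd z) \<partial>\<pi>) = ennreal m * emeasure \<pi> (space \<pi>)" .
  have hle: "(\<integral>\<^sup>+ z. h (snd z) \<partial>\<pi>) \<le> (\<integral>\<^sup>+ x. h x \<partial>\<nu>)" by (rule marg_snd[OF pi sm hb])
  have one: "1 \<le> emeasure \<pi> (space \<pi>) + ennreal \<epsilon>"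
  proof (cases "\<epsilon> \<le> 1")
    case True
    then have "1 = ennreal (1 - \<epsilon>) + ennreal \<epsilon>" using \<open>0 \<le> \<epsilon>\<close> by (simp flip: ennreal_plus)
    then show ?thesis using big by (metis add_right_mono)
  next
    case False then show ?thesis by (metis add_increasing zero_le linear ennreal_1 ennreal_leI)
  qed
  have "ennreal m \<le> ennreal m * emeasure \<pi> (space \<pi>) + ennreal (m * \<epsilon>)"
  proof -
    have "ennreal m = ennreal m * 1" by simp
    also have "\<dots> \<le> ennreal m * (emeasure \<pi> (space \<pi>) + ennreal \<epsilon>)" by (rule mult_left_mono[OF one]) simp
    also have "\<dots> = ennreal m * emeasure \<pi> (space \<pi>) + ennreal (m * \<epsilon>)"
      using \<open>0 \<le> m\<close> \<open>0 \<le> \<epsilon>\<close> by (simp add: distrib_left ennreal_mult)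
    finally show ?thesis .
  qed
  then have "(\<integral>\<^sup>+ x. h x \<partial>\<nu>) + (\<integral>\<^sup>+ x. g x \<partial>\<nu>) \<le> ((\<integral>\<^sup>+ z. g (snd z) \<partial>\<pi>) + (\<integral>\<^sup>+ z. h (snd z) \<partial>\<pi>)) + ennreal (m * \<epsilon>)"
    using e1 e2 by (simp add: add.commute)
  also have "\<dots> \<le> ((\<integral>\<^sup>+ z. g (snd z) \<partial>\<pi>) + (\<integral>\<^sup>+ x. h x \<partial>\<nu>)) + ennreal (m * \<epsilon>)"
    using hle by (intro add_right_mono add_left_mono)
  also have "\<dots> = (\<integral>\<^sup>+ x. h x \<partial>\<nu>) + ((\<integral>\<^sup>+ z. g (snd z) \<partial>\<pi>) + ennreal (m * \<epsilon>))"
    by (simp add: ac_simps)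
  finally have "(\<integral>\<^sup>+ x. h x \<partial>\<nu>) + (\<integral>\<^sup>+ x. g x \<partial>\<nu>) \<le> (\<integral>\<^sup>+ x. h x \<partial>\<nu>) + ((\<integral>\<^sup>+ z. g (snd z) \<partial>\<pi>) + ennreal (m * \<epsilon>))" .
  moreover have "(\<integral>\<^sup>+ x. h x \<partial>\<nu>) \<noteq> \<infinity>"
    using e1 by (metis ennreal_add_eq_top ennreal_neq_top infinity_ennreal_def)
  ultimately show ?thesis by (simp add: ennreal_add_left_cancel_le)
qed

lemma pointwise_real:
  fixes x y z :: real
  assumes "x + y \<le> z" "0 \<le> z"
  shows "ennreal x + ennreal y \<le> ennreal z + ennreal (- x) + ennreal (- y)"
proof -
  have ex: "ennreal x = ennreal (max x 0)" for x :: real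
    by (cases "x \<le> 0") (simp_all add: ennreal_neg max_absorb2 max_absorb1)
  have "ennreal x + ennreal y = ennreal (max x 0 + max y 0)"
    by (subst ex[of x], subst ex[of y]) (rule ennreal_plus[symmetric]; simp)
  also have "\<dots> \<le> ennreal (z + max (-x) 0 + max (-y) 0)"
    using assms by (intro ennreal_leI) (simp add: max_def)
  also have "\<dots> = ennreal z + ennreal (max (-x) 0) + ennreal (max (-y) 0)"
    using assms by (simp add: ennreal_plus)
  also have "\<dots> = ennreal z + ennreal (- x) + ennreal (- y)"
    by (simp only: ex[symmetric])
  finally show ?thesis .
qed

lemma pointwise:
  fixes a b :: ereal and g :: ennreal
  assumes "a + b \<le> enn2ereal g" "a \<noteq> \<infinity>" "b \<noteq> \<infinity>"
  shows "e2ennreal a + e2ennreal b \<le> g + e2ennreal (- a) + e2ennreal (- b)"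
proof (cases "a = -\<infinity> \<or> b = -\<infinity>")
  case True then show ?thesis by auto
next
  case False
  then obtain x where x: "a = ereal x" using assms(2) by (cases a) auto
  obtain y where y: "b = ereal y" using assms(3) False by (cases b) auto
  show ?thesis
  proof (cases g)
    case (real z)
    then have z: "x + y \<le> z" "0 \<le> z" using assms(1) x y by auto
    show ?thesis using pointwise_real[OF z] x y real by simp
  next
    case top then show ?thesis by simp
  qed
qed

lemma min_SUP_nat: "(SUP M. min a (of_nat M)) = (a::ennreal)"
proof -
  have "(SUP M. min a (of_nat M)) = inf a (SUP M. of_nat M :: ennreal)"
    using inf_SUP[of a of_nat UNIV] by (simp add: inf_min)
  also have "\<dots> = a" by (simp add: ennreal_SUP_of_nat_eq_top)
  finally show ?thesis .
qed

lemma main_ineq: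
  fixes \<mu> :: "'a::polish_space measure" and \<nu> :: "'b::polish_space measure"
    and c :: "'a \<times> 'b \<Rightarrow> ennreal"
  assumes sm: "sets \<mu> = sets borel" and m1: "emeasure \<mu> (space \<mu>) = 1"
    and sn: "sets \<nu> = sets borel" and n1: "emeasure \<nu> (space \<nu>) = 1"
    and cm: "c \<in> borel_measurable borel"
    and ip: "ereal_integrable \<mu> \<phi>" and iq: "ereal_integrable \<nu> \<psi>"
    and fin1: "\<forall>x. \<phi> x \<noteq> \<infinity>" and fin2: "\<forall>y. \<psi> y \<noteq> \<infinity>"
    and le: "\<forall>x y. \<phi> x + \<psi> y \<le> enn2ereal (c (x, y))"
  shows "ereal_integral \<mu> \<phi> + ereal_integral \<nu> \<psi> \<le> enn2ereal (P_rel \<mu> \<nu> c)"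
proof -
  define P where "P = P_rel \<mu> \<nu> c"
  define p where "p x = e2ennreal (\<phi> x)" for x
  define n where "n x = e2ennreal (- \<phi> x)" for x
  define q where "q y = e2ennreal (\<psi> y)" for y
  define r where "r y = e2ennreal (- \<psi> y)" for y
  have \<phi>b: "\<phi> \<in> borel_measurable borel" using ip measurable_cong_sets[OF sm refl]
    unfolding ereal_integrable_def by blast
  have \<psi>b: "\<psi> \<in> borel_measurable borel" using iq measurable_cong_sets[OF sn refl]
    unfolding ereal_integrable_def by blast
  have pb: "p \<in> borel_measurable borel" unfolding p_def using \<phi>b by measurable
  have nb: "n \<in> borel_measurable borel" unfolding n_def using \<phi>b by measurable
  have qb: "q \<in> borel_measurable borel" unfolding q_def using \<psi>b by measurable
  have rb: "r \<in> borel_measurable borel" unfolding r_def using \<psi>b by measurable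
  have pmu: "p \<in> borel_measurable \<mu>" using pb measurable_cong_sets[OF sm refl] by blast
  have qnu: "q \<in> borel_measurable \<nu>" using qb measurable_cong_sets[OF sn refl] by blast
  define Ip where "Ip = (\<integral>\<^sup>+ x. p x \<partial>\<mu>)"
  define In where "In = (\<integral>\<^sup>+ x. n x \<partial>\<mu>)"
  define Iq where "Iq = (\<integral>\<^sup>+ x. q x \<partial>\<nu>)"
  define Ir where "Ir = (\<integral>\<^sup>+ x. r x \<partial>\<nu>)"
  have fins: "Ip < \<infinity>" "In < \<infinity>" "Iq < \<infinity>" "Ir < \<infinity>"
    using ip iq unfolding ereal_integrable_def Ip_def In_def Iq_def Ir_def p_def n_def q_def r_def by auto
  have pw: "p x + q y \<le> c (x, y) + n x + r y" for x y
    unfolding p_def q_def n_def r_def using le fin1 fin2 by (intro pointwise) auto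
  define pM where "pM M x = min (p x) (of_nat M)" for M x
  define qM where "qM M y = min (q y) (of_nat M)" for M y
  have pMb: "pM M \<in> borel_measurable borel" for M unfolding pM_def using pb by measurable
  have qMb: "qM M \<in> borel_measurable borel" for M unfolding qM_def using qb by measurable
  have key: "(\<integral>\<^sup>+ x. pM M x \<partial>\<mu>) + (\<integral>\<^sup>+ y. qM M y \<partial>\<nu>) \<le> P + In + Ir" for M
  proof (rule ennreal_le_epsilon)
    fix e :: real assume fin: "P + In + Ir < top" and e: "0 < e"
    define \<epsilon> where "\<epsilon> = e / (4 * (real M + 1))"
    have \<epsilon>0: "0 < \<epsilon>" unfolding \<epsilon>_def using e by auto
    have "real M * \<epsilon> * 4 = e * (real M / (real M + 1))" unfolding \<epsilon>_def by (simp add: field_simps)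
    also have "\<dots> \<le> e * 1" using e by (intro mult_left_mono) auto
    finally have "real M * \<epsilon> * 4 \<le> e" by simp
    then have M\<epsilon>: "e/2 + (real M * \<epsilon> + real M * \<epsilon>) \<le> e" by linarith
    have Pe: "P_eps \<mu> \<nu> c \<epsilon> \<le> P" unfolding P_def using \<epsilon>0 by (rule P_eps_le_P_rel)
    have Pfin: "P_eps \<mu> \<nu> c \<epsilon> \<noteq> \<infinity>" using Pe fin by (auto simp: top_unique)
    have "P_eps \<mu> \<nu> c \<epsilon> + 0 < P_eps \<mu> \<nu> c \<epsilon> + ennreal (e/2)"
      using Pfin e by (subst ennreal_add_left_cancel_less) auto
    then obtain \<pi> where pi: "\<pi> \<in> Pi_eps \<mu> \<nu> \<epsilon>" and pic: "(\<integral>\<^sup>+ z. c z \<partial>\<pi>) < P_eps \<mu> \<nu> c \<epsilon> + ennreal (e/2)"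
      unfolding P_eps_def by (auto simp: INF_less_iff)
    have sp: "sets \<pi> = sets borel" using pi by (auto simp: Pi_eps_def)
    have fm: "fst \<in> measurable \<pi> borel"
      by (subst measurable_cong_sets[OF sp refl]) (metis borel_prod measurable_fst)
    have sm': "snd \<in> measurable \<pi> borel"
      by (subst measurable_cong_sets[OF sp refl]) (metis borel_prod measurable_snd)
    have cpi: "c \<in> borel_measurable \<pi>" using cm measurable_cong_sets[OF sp refl] by blast
    have t1: "(\<integral>\<^sup>+ x. pM M x \<partial>\<mu>) \<le> (\<integral>\<^sup>+ z. pM M (fst z) \<partial>\<pi>) + ennreal (real M * \<epsilon>)"
      by (rule trunc_bound[OF pi sm m1 pMb]) (use \<epsilon>0 in \<open>auto simp: pM_def ennreal_of_nat_eq_real_of_nat\<close>)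
    have t2: "(\<integral>\<^sup>+ x. qM M x \<partial>\<nu>) \<le> (\<integral>\<^sup>+ z. qM M (snd z) \<partial>\<pi>) + ennreal (real M * \<epsilon>)"
      by (rule trunc_bound_snd[OF pi sn n1 qMb]) (use \<epsilon>0 in \<open>auto simp: qM_def ennreal_of_nat_eq_real_of_nat\<close>)
    have "(\<integral>\<^sup>+ z. pM M (fst z) \<partial>\<pi>) + (\<integral>\<^sup>+ z. qM M (snd z) \<partial>\<pi>) = (\<integral>\<^sup>+ z. pM M (fst z) + qM M (snd z) \<partial>\<pi>)"
      by (rule nn_integral_add[symmetric]) (use measurable_compose[OF fm pMb] measurable_compose[OF sm' qMb] in auto)
    also have "\<dots> \<le> (\<integral>\<^sup>+ z. c z + n (fst z) + r (snd z) \<partial>\<pi>)"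
    proof (rule nn_integral_mono)
      fix z :: "'a \<times> 'b"
      have "pM M (fst z) + qM M (snd z) \<le> p (fst z) + q (snd z)" unfolding pM_def qM_def
        by (intro add_mono) auto
      also have "\<dots> \<le> c z + n (fst z) + r (snd z)" using pw[of "fst z" "snd z"] by simp
      finally show "pM M (fst z) + qM M (snd z) \<le> c z + n (fst z) + r (snd z)" .
    qed
    also have "\<dots> = (\<integral>\<^sup>+ z. c z \<partial>\<pi>) + (\<integral>\<^sup>+ z. n (fst z) \<partial>\<pi>) + (\<integral>\<^sup>+ z. r (snd z) \<partial>\<pi>)"
      using measurable_compose[OF fm nb] measurable_compose[OF sm' rb] cpi
      by (simp add: nn_integral_add)
    also have "\<dots> \<le> (\<integral>\<^sup>+ z. c z \<partial>\<pi>) + In + Ir"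
      unfolding In_def Ir_def
      by (intro add_mono order_refl marg_fst[OF pi sm nb] marg_snd[OF pi sn rb])
    finally have t3: "(\<integral>\<^sup>+ z. pM M (fst z) \<partial>\<pi>) + (\<integral>\<^sup>+ z. qM M (snd z) \<partial>\<pi>) \<le> (\<integral>\<^sup>+ z. c z \<partial>\<pi>) + In + Ir" .
    have "(\<integral>\<^sup>+ x. pM M x \<partial>\<mu>) + (\<integral>\<^sup>+ y. qM M y \<partial>\<nu>) \<le>
       ((\<integral>\<^sup>+ z. pM M (fst z) \<partial>\<pi>) + (\<integral>\<^sup>+ z. qM M (snd z) \<partial>\<pi>)) + (ennreal (real M * \<epsilon>) + ennreal (real M * \<epsilon>))"
      using add_mono[OF t1 t2] by (simp add: ac_simps)
    also have "\<dots> \<le> ((\<integral>\<^sup>+ z. c z \<partial>\<pi>) + In + Ir) + (ennreal (real M * \<epsilon>) + ennreal (real M * \<epsilon>))"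
      using t3 by (rule add_right_mono)
    also have "\<dots> \<le> ((P_eps \<mu> \<nu> c \<epsilon> + ennreal (e/2)) + In + Ir) + (ennreal (real M * \<epsilon>) + ennreal (real M * \<epsilon>))"
      using pic by (intro add_right_mono) auto
    also have "\<dots> \<le> (P + In + Ir) + (ennreal (e/2) + (ennreal (real M * \<epsilon>) + ennreal (real M * \<epsilon>)))"
      using Pe by (simp add: ac_simps add_right_mono)
    also have "ennreal (e/2) + (ennreal (real M * \<epsilon>) + ennreal (real M * \<epsilon>)) = ennreal (e/2 + (real M * \<epsilon> + real M * \<epsilon>))"
    proof -
      have x0: "0 \<le> real M * \<epsilon>" using \<epsilon>0 by simp
      have a: "ennreal (real M * \<epsilon> + real M * \<epsilon>) = ennreal (real M * \<epsilon>) + ennreal (real M * \<epsilon>)"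
        by (rule ennreal_plus[OF x0 x0])
      have b: "ennreal (e/2 + (real M * \<epsilon> + real M * \<epsilon>)) = ennreal (e/2) + ennreal (real M * \<epsilon> + real M * \<epsilon>)"
        by (rule ennreal_plus) (use e x0 in \<open>auto simp: mult.commute\<close>)
      show ?thesis using a b by simp
    qed
    also have "\<dots> \<le> ennreal e" using M\<epsilon> by (rule ennreal_leI)
    finally show "(\<integral>\<^sup>+ x. pM M x \<partial>\<mu>) + (\<integral>\<^sup>+ y. qM M y \<partial>\<nu>) \<le> P + In + Ir + ennreal e"
      by (simp add: add_left_mono)
  qed
  have incp: "incseq pM"
  proof (rule incseq_SucI, rule le_funI)
    fix M x show "pM M x \<le> pM (Suc M) x" unfolding pM_def by (rule min.mono) auto
  qed
  have incq: "incseq qM"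
  proof (rule incseq_SucI, rule le_funI)
    fix M x show "qM M x \<le> qM (Suc M) x" unfolding qM_def by (rule min.mono) auto
  qed
  have Ip_eq: "Ip = (SUP M. \<integral>\<^sup>+ x. pM M x \<partial>\<mu>)"
  proof -
    have "Ip = (\<integral>\<^sup>+ x. (SUP M. pM M x) \<partial>\<mu>)" unfolding Ip_def pM_def by (simp add: min_SUP_nat)
    also have "\<dots> = (SUP M. \<integral>\<^sup>+ x. pM M x \<partial>\<mu>)"
      by (rule nn_integral_monotone_convergence_SUP[OF incp]) (use pMb measurable_cong_sets[OF sm refl] in blast)
    finally show ?thesis .
  qed
  have Iq_eq: "Iq = (SUP M. \<integral>\<^sup>+ x. qM M x \<partial>\<nu>)"
  proof -
    have "Iq = (\<integral>\<^sup>+ x. (SUP M. qM M x) \<partial>\<nu>)" unfolding Iq_def qM_def by (simp add: min_SUP_nat)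
    also have "\<dots> = (SUP M. \<integral>\<^sup>+ x. qM M x \<partial>\<nu>)"
      by (rule nn_integral_monotone_convergence_SUP[OF incq]) (use qMb measurable_cong_sets[OF sn refl] in blast)
    finally show ?thesis .
  qed
  have "Ip + Iq = (SUP M. (\<integral>\<^sup>+ x. pM M x \<partial>\<mu>) + (\<integral>\<^sup>+ x. qM M x \<partial>\<nu>))"
    unfolding Ip_eq Iq_eq
  proof (rule ennreal_SUP_add[symmetric])
    show "incseq (\<lambda>M. \<integral>\<^sup>+ x. pM M x \<partial>\<mu>)" unfolding incseq_def
    proof (intro allI impI)
      fix m k :: nat assume "m \<le> k"
      then have "pM m \<le> pM k" using incp unfolding incseq_def by blast
      then show "(\<integral>\<^sup>+ x. pM m x \<partial>\<mu>) \<le> (\<integral>\<^sup>+ x. pM k x \<partial>\<mu>)" by (intro nn_integral_mono) (simp add: le_fun_def)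
    qed
    show "incseq (\<lambda>M. \<integral>\<^sup>+ x. qM M x \<partial>\<nu>)" unfolding incseq_def
    proof (intro allI impI)
      fix m k :: nat assume "m \<le> k"
      then have "qM m \<le> qM k" using incq unfolding incseq_def by blast
      then show "(\<integral>\<^sup>+ x. qM m x \<partial>\<nu>) \<le> (\<integral>\<^sup>+ x. qM k x \<partial>\<nu>)" by (intro nn_integral_mono) (simp add: le_fun_def)
    qed
  qed
  also have "\<dots> \<le> P + In + Ir" by (rule SUP_least) (rule key)
  finally have K: "Ip + Iq \<le> P + In + Ir" .
  obtain ip' where ip': "Ip = ennreal ip'" "0 \<le> ip'" using fins(1) by (cases Ip rule: ennreal_cases) auto
  obtain in' where in': "In = ennreal in'" "0 \<le> in'" using fins(2) by (cases In rule: ennreal_cases) auto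
  obtain iq' where iq': "Iq = ennreal iq'" "0 \<le> iq'" using fins(3) by (cases Iq rule: ennreal_cases) auto
  obtain ir' where ir': "Ir = ennreal ir'" "0 \<le> ir'" using fins(4) by (cases Ir rule: ennreal_cases) auto
  have l1: "ereal_integral \<mu> \<phi> = enn2ereal Ip - enn2ereal In"
    unfolding ereal_integral_def Ip_def In_def p_def n_def ..
  have l2: "ereal_integral \<nu> \<psi> = enn2ereal Iq - enn2ereal Ir"
    unfolding ereal_integral_def Iq_def Ir_def q_def r_def ..
  have lhs: "ereal_integral \<mu> \<phi> + ereal_integral \<nu> \<psi> = ereal (ip' - in' + (iq' - ir'))"
    unfolding l1 l2 using ip' in' iq' ir' by simp
  show ?thesis
  proof (cases P)
    case (real pr)
    then have "ennreal (ip' + iq') \<le> ennreal (pr + in' + ir')"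
      using K ip' in' iq' ir' by (simp add: ennreal_plus)
    then have "ip' + iq' \<le> pr + in' + ir'" using real ip' in' iq' ir' by (subst (asm) ennreal_le_iff) auto
    then show ?thesis unfolding lhs P_def[symmetric] using real by simp
  next
    case top
    then show ?thesis unfolding P_def[symmetric] by simp
  qed
qed

theorem proposition2p1:
  fixes \<mu> :: "'a::polish_space measure" and \<nu> :: "'b::polish_space measure"
    and c :: "'a \<times> 'b \<Rightarrow> ennreal"
  assumes "sets \<mu> = sets borel" and "emeasure \<mu> (space \<mu>) = 1"
    and "sets \<nu> = sets borel" and "emeasure \<nu> (space \<nu>) = 1"
    and "c \<in> borel_measurable borel"
  shows "enn2ereal (P_rel \<mu> \<nu> c) \<ge> D_dual \<mu> \<nu> c"
  unfolding D_dual_def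
proof (rule SUP_least)
  fix z assume "z \<in> {(\<phi>, \<psi>). ereal_integrable \<mu> \<phi> \<and> ereal_integrable \<nu> \<psi>
          \<and> (\<forall>x. \<phi> x \<noteq> \<infinity>) \<and> (\<forall>y. \<psi> y \<noteq> \<infinity>)
          \<and> (\<forall>x y. \<phi> x + \<psi> y \<le> enn2ereal (c (x, y)))}"
  then obtain \<phi> \<psi> where z: "z = (\<phi>, \<psi>)" and h: "ereal_integrable \<mu> \<phi>" "ereal_integrable \<nu> \<psi>"
    "\<forall>x. \<phi> x \<noteq> \<infinity>" "\<forall>y. \<psi> y \<noteq> \<infinity>" "\<forall>x y. \<phi> x + \<psi> y \<le> enn2ereal (c (x, y))"
    by auto
  show "(case z of (\<phi>, \<psi>) \<Rightarrow> ereal_integral \<mu> \<phi> + ereal_integral \<nu> \<psi>) \<le> enn2ereal (P_rel \<mu> \<nu> c)"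
    unfolding z using main_ineq[OF assms h] by simp
qed

end
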